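(* Let $R$ be a Noetherian ring, $I\subseteq R$ an ideal, and $J_1=(f_1,\ldots,f_m)\subseteq I$, $J_2=(g_1,\ldots,g_m)\subseteq I$ ideals with $f_i-g_i\in I^2$ for $i=1,\ldots,m$. Assume the pair $J_1\subseteq I$ is Aluffi torsion-free. Let $\mathcal Z_1=\{(a_1,\ldots,a_m)\in R^m:\sum a_if_i=0\}$ and $\mathcal Z_2=\{(a_1,\ldots,a_m)\in R^m:\sum a_ig_i=0\}$. Then $J_2\subseteq I$ is Aluffi torsion-free if and only if $\mathcal Z_1\cap I^nR^m\subseteq \mathcal Z_2+I^{n+1}R^m$ for all $n\ge0$.
   Context: A pair of ideals $J\subseteq I$ in a ring $R$ is called Aluffi torsion-free if $J\cap I^n=JI^{n-1}$ for all $n\ge1$ (with $I^0=R$). *)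

theory Defs
  imports "HOL-Algebra.Algebra"
begin

fun ideal_power :: "('a, 'b) ring_scheme \<Rightarrow> 'a set \<Rightarrow> nat \<Rightarrow> 'a set" where
  "ideal_power R I 0 = carrier R"
| "ideal_power R I (Suc n) = ideal_prod R I (ideal_power R I n)"

definition aluffi_torsion_free :: "('a, 'b) ring_scheme \<Rightarrow> 'a set \<Rightarrow> 'a set \<Rightarrow> bool" where
  "aluffi_torsion_free R J I \<longleftrightarrow>
     (\<forall>n\<ge>1. J \<inter> ideal_power R I n = ideal_prod R J (ideal_power R I (n - 1)))"

text \<open>Elements of R^m, represented as functions nat \<Rightarrow> 'a vanishing (= zero) from index m on.\<close>
definition vecs :: "('a, 'b) ring_scheme \<Rightarrow> nat \<Rightarrow> (nat \<Rightarrow> 'a) set" where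
  "vecs R m = {a. (\<forall>i<m. a i \<in> carrier R) \<and> (\<forall>i\<ge>m. a i = \<zero>\<^bsub>R\<^esub>)}"

definition syz :: "('a, 'b) ring_scheme \<Rightarrow> nat \<Rightarrow> (nat \<Rightarrow> 'a) \<Rightarrow> (nat \<Rightarrow> 'a) set" where
  "syz R m f = {a \<in> vecs R m. finsum R (\<lambda>i. a i \<otimes>\<^bsub>R\<^esub> f i) {..<m} = \<zero>\<^bsub>R\<^esub>}"

definition ideal_vecs :: "('a, 'b) ring_scheme \<Rightarrow> nat \<Rightarrow> 'a set \<Rightarrow> (nat \<Rightarrow> 'a) set" where
  "ideal_vecs R m K = {a \<in> vecs R m. \<forall>i<m. a i \<in> K}"

definition vecs_sum :: "('a, 'b) ring_scheme \<Rightarrow> nat \<Rightarrow> (nat \<Rightarrow> 'a) set \<Rightarrow> (nat \<Rightarrow> 'a) set \<Rightarrow> (nat \<Rightarrow> 'a) set" where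
  "vecs_sum R m A B = {(\<lambda>i. if i < m then a i \<oplus>\<^bsub>R\<^esub> b i else \<zero>\<^bsub>R\<^esub>) | a b. a \<in> A \<and> b \<in> B}"

end

theory Submission
  imports Defs
begin


lemma (in ring) ideal_finsum:
  assumes "ideal K R" "finite A" "\<And>i. i \<in> A \<Longrightarrow> h i \<in> K"
  shows "finsum R h A \<in> K"
  using assms(2,3)
proof (induction A rule: finite_induct)
  case empty
  then show ?case using assms(1) by (simp add: additive_subgroup.zero_closed ideal.axioms(1))
next
  case (insert x A)
  have hc: "h \<in> A \<rightarrow> carrier R" "h x \<in> carrier R"
    using insert.prems ideal.Icarr[OF assms(1)] by auto
  have "finsum R h (insert x A) = h x \<oplus> finsum R h A"
    using insert.hyps hc by (simp add: finsum_insert)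
  then show ?case using insert assms(1)
    by (simp add: additive_subgroup.a_closed ideal.axioms(1))
qed

lemma (in ring) pow_ideal: "ideal I R \<Longrightarrow> ideal (ideal_power R I n) R"
  by (induction n) (auto simp: oneideal ideal_prod_is_ideal)

lemma (in ring) pow_Suc_sub: "ideal I R \<Longrightarrow> ideal_power R I (Suc n) \<subseteq> ideal_power R I n"
  using ideal_prod_inter[OF _ pow_ideal] by auto

lemma (in ring) pow_antimono: "ideal I R \<Longrightarrow> n \<le> k \<Longrightarrow> ideal_power R I k \<subseteq> ideal_power R I n"
proof (induction k)
  case 0 then show ?case by simp
next
  case (Suc k)
  then show ?case using pow_Suc_sub[OF Suc.prems(1), of k] by (cases "n = Suc k") auto
qed

lemma (in ring) pow_one: "ideal I R \<Longrightarrow> ideal_power R I 1 = I"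
  by (simp add: ideal_prod_one)

lemma (in ring) prod_mult_right:
  assumes "ideal I R" "ideal K R" "ideal L R" "y \<in> carrier R"
    and "\<And>j. j \<in> K \<Longrightarrow> j \<otimes> y \<in> L"
    and "s \<in> ideal_prod R I K"
  shows "s \<otimes> y \<in> ideal_prod R I L"
  using assms(6)
proof (induction s rule: ideal_prod.induct)
  case (prod i j)
  have ic: "i \<in> carrier R" by (rule ideal.Icarr[OF assms(1) prod(1)])
  have jc: "j \<in> carrier R" by (rule ideal.Icarr[OF assms(2) prod(2)])
  have "i \<otimes> (j \<otimes> y) \<in> ideal_prod R I L"
    by (rule ideal_prod.prod[OF prod(1) assms(5)[OF prod(2)]])
  moreover have "i \<otimes> j \<otimes> y = i \<otimes> (j \<otimes> y)" using ic jc assms(4) by (rule m_assoc)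
  ultimately show ?case by simp
next
  case (sum s1 s2)
  have "s1 \<in> carrier R" "s2 \<in> carrier R"
    using sum.hyps ideal_prod_in_carrier[OF assms(1,2)] by auto
  then have "(s1 \<oplus> s2) \<otimes> y = s1 \<otimes> y \<oplus> s2 \<otimes> y" using assms(4) by (rule l_distr)
  moreover have "s1 \<otimes> y \<oplus> s2 \<otimes> y \<in> ideal_prod R I L"
    by (rule ideal_prod.sum[OF sum.IH])
  ultimately show ?case by simp
qed

lemma (in ring) pow_mult:
  assumes "ideal I R" "x \<in> ideal_power R I a" "y \<in> ideal_power R I b"
  shows "x \<otimes> y \<in> ideal_power R I (a + b)"
  using assms(2)
proof (induction a arbitrary: x)
  case 0
  then have "x \<in> carrier R" by simp
  then have "x \<otimes> y \<in> ideal_power R I b" by (rule ideal.I_l_closed[OF pow_ideal[OF assms(1)] assms(3)])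
  then show ?case by (simp only: add_0)
next
  case (Suc a)
  have yc: "y \<in> carrier R" by (rule ideal.Icarr[OF pow_ideal[OF assms(1)] assms(3)])
  have xa: "x \<in> ideal_prod R I (ideal_power R I a)" using Suc.prems by simp
  have "x \<otimes> y \<in> ideal_prod R I (ideal_power R I (a + b))"
    by (rule prod_mult_right[OF assms(1) pow_ideal[OF assms(1)] pow_ideal[OF assms(1)] yc Suc.IH xa])
  then show ?case by simp
qed

definition lin :: "('a, 'b) ring_scheme \<Rightarrow> nat \<Rightarrow> (nat \<Rightarrow> 'a) \<Rightarrow> 'a set \<Rightarrow> 'a set" where
  "lin R m F K = {x. \<exists>b. (\<forall>i<m. b i \<in> K) \<and> x = finsum R (\<lambda>i. b i \<otimes>\<^bsub>R\<^esub> F i) {..<m}}"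

lemma linI: "(\<forall>i<m. b i \<in> K) \<Longrightarrow> x = finsum R (\<lambda>i. b i \<otimes>\<^bsub>R\<^esub> F i) {..<m} \<Longrightarrow> x \<in> lin R m F K"
  unfolding lin_def by blast

lemma linE: "x \<in> lin R m F K \<Longrightarrow> (\<And>b. \<forall>i<m. b i \<in> K \<Longrightarrow> x = finsum R (\<lambda>i. b i \<otimes>\<^bsub>R\<^esub> F i) {..<m} \<Longrightarrow> P) \<Longrightarrow> P"
  unfolding lin_def by blast

context cring
begin

lemma alg3: "c \<in> carrier R \<Longrightarrow> d \<in> carrier R \<Longrightarrow> (c \<oplus> d) \<ominus> d = c"
  by algebra

lemma alg1: "x \<in> carrier R \<Longrightarrow> y \<in> carrier R \<Longrightarrow> z \<in> carrier R \<Longrightarrow> x \<otimes> z = ((x \<ominus> y) \<oplus> y) \<otimes> z"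
  by algebra

lemma alg2: "x \<in> carrier R \<Longrightarrow> y \<in> carrier R \<Longrightarrow> z \<in> carrier R \<Longrightarrow> z \<otimes> x = z \<otimes> (x \<ominus> y) \<oplus> z \<otimes> y"
  by algebra

lemma S_add:
  fixes m :: nat
  assumes "F ` {..<m} \<subseteq> carrier R" "\<And>i. i < m \<Longrightarrow> b i \<in> carrier R" "\<And>i. i < m \<Longrightarrow> c i \<in> carrier R"
  shows "finsum R (\<lambda>i. (b i \<oplus> c i) \<otimes> F i) {..<m}
       = finsum R (\<lambda>i. b i \<otimes> F i) {..<m} \<oplus> finsum R (\<lambda>i. c i \<otimes> F i) {..<m}"
proof -
  have "finsum R (\<lambda>i. (b i \<oplus> c i) \<otimes> F i) {..<m} = finsum R (\<lambda>i. b i \<otimes> F i \<oplus> c i \<otimes> F i) {..<m}"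
    by (rule finsum_cong') (use assms in \<open>auto simp: l_distr\<close>)
  also have "\<dots> = finsum R (\<lambda>i. b i \<otimes> F i) {..<m} \<oplus> finsum R (\<lambda>i. c i \<otimes> F i) {..<m}"
    by (rule finsum_addf) (use assms in auto)
  finally show ?thesis .
qed

lemma S_sub:
  fixes m :: nat
  assumes "F ` {..<m} \<subseteq> carrier R" "\<And>i. i < m \<Longrightarrow> b i \<in> carrier R" "\<And>i. i < m \<Longrightarrow> c i \<in> carrier R"
  shows "finsum R (\<lambda>i. (b i \<ominus> c i) \<otimes> F i) {..<m}
       = finsum R (\<lambda>i. b i \<otimes> F i) {..<m} \<ominus> finsum R (\<lambda>i. c i \<otimes> F i) {..<m}"
proof -
  have "finsum R (\<lambda>i. b i \<otimes> F i) {..<m} = finsum R (\<lambda>i. ((b i \<ominus> c i) \<oplus> c i) \<otimes> F i) {..<m}"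
    by (rule finsum_cong') (use assms in \<open>auto intro: alg1\<close>)
  also have "\<dots> = finsum R (\<lambda>i. (b i \<ominus> c i) \<otimes> F i) {..<m} \<oplus> finsum R (\<lambda>i. c i \<otimes> F i) {..<m}"
    by (rule S_add) (use assms in auto)
  finally have e: "finsum R (\<lambda>i. b i \<otimes> F i) {..<m} = finsum R (\<lambda>i. (b i \<ominus> c i) \<otimes> F i) {..<m} \<oplus> finsum R (\<lambda>i. c i \<otimes> F i) {..<m}" .
  have c1: "finsum R (\<lambda>i. (b i \<ominus> c i) \<otimes> F i) {..<m} \<in> carrier R"
    by (rule finsum_closed) (use assms in auto)
  have c2: "finsum R (\<lambda>i. c i \<otimes> F i) {..<m} \<in> carrier R"
    by (rule finsum_closed) (use assms in auto)
  show ?thesis unfolding e using c1 c2 by (rule alg3[symmetric])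
qed

lemma S_sub2:
  fixes m :: nat
  assumes "F ` {..<m} \<subseteq> carrier R" "G ` {..<m} \<subseteq> carrier R" "\<And>i. i < m \<Longrightarrow> b i \<in> carrier R"
  shows "finsum R (\<lambda>i. b i \<otimes> F i) {..<m} \<ominus> finsum R (\<lambda>i. b i \<otimes> G i) {..<m}
       = finsum R (\<lambda>i. b i \<otimes> (F i \<ominus> G i)) {..<m}"
proof -
  have Fc: "\<And>i. i < m \<Longrightarrow> F i \<in> carrier R" and Gc: "\<And>i. i < m \<Longrightarrow> G i \<in> carrier R"
    using assms(1,2) by auto
  have "finsum R (\<lambda>i. b i \<otimes> F i) {..<m} = finsum R (\<lambda>i. b i \<otimes> (F i \<ominus> G i) \<oplus> b i \<otimes> G i) {..<m}"
  proof (rule finsum_cong')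
    show "(\<lambda>i. b i \<otimes> (F i \<ominus> G i) \<oplus> b i \<otimes> G i) \<in> {..<m} \<rightarrow> carrier R"
      using Fc Gc assms(3) by auto
    show "\<And>i. i \<in> {..<m} \<Longrightarrow> b i \<otimes> F i = b i \<otimes> (F i \<ominus> G i) \<oplus> b i \<otimes> G i"
      using Fc Gc assms(3) by (auto intro: alg2)
  qed simp
  also have "\<dots> = finsum R (\<lambda>i. b i \<otimes> (F i \<ominus> G i)) {..<m} \<oplus> finsum R (\<lambda>i. b i \<otimes> G i) {..<m}"
    by (rule finsum_addf) (use Fc Gc assms(3) in auto)
  finally have e: "finsum R (\<lambda>i. b i \<otimes> F i) {..<m} = finsum R (\<lambda>i. b i \<otimes> (F i \<ominus> G i)) {..<m} \<oplus> finsum R (\<lambda>i. b i \<otimes> G i) {..<m}" .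
  have c1: "finsum R (\<lambda>i. b i \<otimes> (F i \<ominus> G i)) {..<m} \<in> carrier R"
    by (rule finsum_closed) (use Fc Gc assms(3) in auto)
  have c2: "finsum R (\<lambda>i. b i \<otimes> G i) {..<m} \<in> carrier R"
    by (rule finsum_closed) (use Fc Gc assms(3) in auto)
  show ?thesis unfolding e using c1 c2 by (rule alg3)
qed

lemma S_smult:
  fixes m :: nat
  assumes "F ` {..<m} \<subseteq> carrier R" "\<And>i. i < m \<Longrightarrow> b i \<in> carrier R" "x \<in> carrier R"
  shows "x \<otimes> finsum R (\<lambda>i. b i \<otimes> F i) {..<m} = finsum R (\<lambda>i. (x \<otimes> b i) \<otimes> F i) {..<m}"
proof -
  have "x \<otimes> finsum R (\<lambda>i. b i \<otimes> F i) {..<m} = finsum R (\<lambda>i. x \<otimes> (b i \<otimes> F i)) {..<m}"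
    by (rule finsum_rdistr) (use assms in auto)
  also have "\<dots> = finsum R (\<lambda>i. (x \<otimes> b i) \<otimes> F i) {..<m}"
    by (rule finsum_cong') (use assms in \<open>auto simp: m_assoc\<close>)
  finally show ?thesis .
qed

lemma lin_ideal:
  fixes m :: nat
  assumes "F ` {..<m} \<subseteq> carrier R" "ideal K R"
  shows "ideal (lin R m F K) R"
proof -
  have Kc: "\<And>x. x \<in> K \<Longrightarrow> x \<in> carrier R" by (rule ideal.Icarr[OF assms(2)])
  have sub: "lin R m F K \<subseteq> carrier R"
    unfolding lin_def using assms(1) Kc by (auto intro!: finsum_closed)
  have lmult: "x \<otimes> a \<in> lin R m F K" if th: "a \<in> lin R m F K" "x \<in> carrier R" for a x
  proof -
    obtain b where b: "\<forall>i<m. b i \<in> K" "a = finsum R (\<lambda>i. b i \<otimes> F i) {..<m}"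
      using th(1) by (rule linE)
    have "x \<otimes> a = finsum R (\<lambda>i. (x \<otimes> b i) \<otimes> F i) {..<m}"
      unfolding b(2) by (rule S_smult) (use assms b Kc th in auto)
    moreover have "\<forall>i<m. x \<otimes> b i \<in> K" using b(1) th(2) by (simp add: ideal.I_l_closed[OF assms(2)])
    ultimately show ?thesis by (intro linI)
  qed
  have add: "a \<oplus> c \<in> lin R m F K" if th: "a \<in> lin R m F K" "c \<in> lin R m F K" for a c
  proof -
    obtain b where b: "\<forall>i<m. b i \<in> K" "a = finsum R (\<lambda>i. b i \<otimes> F i) {..<m}"
      using th(1) by (rule linE)
    obtain d where d: "\<forall>i<m. d i \<in> K" "c = finsum R (\<lambda>i. d i \<otimes> F i) {..<m}"
      using th(2) by (rule linE)
    have "a \<oplus> c = finsum R (\<lambda>i. (b i \<oplus> d i) \<otimes> F i) {..<m}"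
      unfolding b(2) d(2) by (rule S_add[symmetric]) (use assms b d Kc in auto)
    moreover have "\<forall>i<m. b i \<oplus> d i \<in> K" using b(1) d(1) assms(2)
      by (simp add: additive_subgroup.a_closed ideal.axioms(1))
    ultimately show ?thesis by (intro linI)
  qed
  have zero: "\<zero> \<in> lin R m F K"
  proof -
    have "finsum R (\<lambda>i. \<zero> \<otimes> F i) {..<m} = finsum R (\<lambda>i. \<zero>) {..<m}"
      by (rule finsum_cong') (use assms in auto)
    then have "\<zero> = finsum R (\<lambda>i. (\<lambda>_. \<zero>) i \<otimes> F i) {..<m}" by simp
    moreover have "\<forall>i<m. (\<lambda>_. \<zero>) i \<in> K" using assms(2)
      by (simp add: additive_subgroup.zero_closed ideal.axioms(1))
    ultimately show ?thesis by (intro linI)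
  qed
  show ?thesis
  proof (rule idealI)
    show "ring R" by (rule ring_axioms)
    show "subgroup (lin R m F K) (add_monoid R)"
    proof (rule subgroup.intro)
      show "lin R m F K \<subseteq> carrier (add_monoid R)" using sub by simp
      show "\<And>x y. x \<in> lin R m F K \<Longrightarrow> y \<in> lin R m F K \<Longrightarrow> x \<otimes>\<^bsub>add_monoid R\<^esub> y \<in> lin R m F K"
        using add by simp
      show "\<one>\<^bsub>add_monoid R\<^esub> \<in> lin R m F K" using zero by simp
      fix x assume x: "x \<in> lin R m F K"
      have xc: "x \<in> carrier R" using x sub by blast
      have "(\<ominus> \<one>) \<otimes> x \<in> lin R m F K" using lmult[OF x] by simp
      moreover have "(\<ominus> \<one>) \<otimes> x = \<ominus> x" using xc by (simp add: l_minus)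
      ultimately show "inv\<^bsub>add_monoid R\<^esub> x \<in> lin R m F K" by (simp add: a_inv_def)
    qed
    show "\<And>a x. a \<in> lin R m F K \<Longrightarrow> x \<in> carrier R \<Longrightarrow> x \<otimes> a \<in> lin R m F K" by (rule lmult)
    show "\<And>a x. a \<in> lin R m F K \<Longrightarrow> x \<in> carrier R \<Longrightarrow> a \<otimes> x \<in> lin R m F K"
      using lmult sub by (metis m_comm subsetD)
  qed
qed

lemma lin_in_ideal:
  fixes m :: nat
  assumes "ideal L R" "\<And>i. i < m \<Longrightarrow> b i \<otimes> F i \<in> L"
  shows "finsum R (\<lambda>i. b i \<otimes> F i) {..<m} \<in> L"
  by (rule ideal_finsum[OF assms(1)]) (use assms(2) in auto)

lemma Idl_lin:
  fixes m :: nat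
  assumes "F ` {..<m} \<subseteq> carrier R"
  shows "Idl (F ` {..<m}) = lin R m F (carrier R)"
proof
  show "Idl (F ` {..<m}) \<subseteq> lin R m F (carrier R)"
  proof (rule genideal_minimal[OF lin_ideal[OF assms oneideal]])
    show "F ` {..<m} \<subseteq> lin R m F (carrier R)"
    proof
      fix y assume "y \<in> F ` {..<m}"
      then obtain j where j: "j < m" "y = F j" by auto
      define b where "b = (\<lambda>i. if j = i then \<one> else \<zero>)"
      have "finsum R (\<lambda>i. b i \<otimes> F i) {..<m} = finsum R (\<lambda>i. if j = i then F i else \<zero>) {..<m}"
        by (rule finsum_cong') (use assms in \<open>auto simp: b_def\<close>)
      also have "\<dots> = F j" by (rule finsum_singleton) (use j(1) assms in auto)
      finally have "y = finsum R (\<lambda>i. b i \<otimes> F i) {..<m}" using j by simp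
      moreover have "\<forall>i<m. b i \<in> carrier R" by (simp add: b_def)
      ultimately show "y \<in> lin R m F (carrier R)" by (intro linI)
    qed
  qed
  show "lin R m F (carrier R) \<subseteq> Idl (F ` {..<m})"
  proof
    fix x assume "x \<in> lin R m F (carrier R)"
    then obtain b where b: "\<forall>i<m. b i \<in> carrier R" "x = finsum R (\<lambda>i. b i \<otimes> F i) {..<m}"
      by (rule linE)
    have I: "ideal (Idl (F ` {..<m})) R" using assms by (rule genideal_ideal)
    show "x \<in> Idl (F ` {..<m})" unfolding b(2)
    proof (rule lin_in_ideal[OF I])
      fix i assume "i < m"
      then have "F i \<in> F ` {..<m}" by simp
      then have "F i \<in> Idl (F ` {..<m})" by (rule subsetD[OF genideal_self[OF assms]])
      then show "b i \<otimes> F i \<in> Idl (F ` {..<m})"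
        by (rule ideal.I_l_closed[OF I]) (use b(1) \<open>i < m\<close> in simp)
    qed
  qed
qed

lemma prod_lin:
  fixes m :: nat
  assumes "F ` {..<m} \<subseteq> carrier R" "ideal K R"
  shows "ideal_prod R (Idl (F ` {..<m})) K = lin R m F K"
proof
  have I: "ideal (Idl (F ` {..<m})) R" using assms(1) by (rule genideal_ideal)
  have Kc: "\<And>x. x \<in> K \<Longrightarrow> x \<in> carrier R" by (rule ideal.Icarr[OF assms(2)])
  show "ideal_prod R (Idl (F ` {..<m})) K \<subseteq> lin R m F K"
  proof
    fix s assume "s \<in> ideal_prod R (Idl (F ` {..<m})) K"
    then show "s \<in> lin R m F K"
    proof (induction s rule: ideal_prod.induct)
      case (prod i j)
      obtain b where b: "\<forall>i<m. b i \<in> carrier R" "i = finsum R (\<lambda>i. b i \<otimes> F i) {..<m}"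
        using prod(1) unfolding Idl_lin[OF assms(1)] lin_def by blast
      have jc: "j \<in> carrier R" using Kc prod(2) .
      have ic: "i \<in> carrier R" unfolding b(2) by (rule finsum_closed) (use assms b in auto)
      have "i \<otimes> j = j \<otimes> i" using ic jc by (rule m_comm)
      also have "\<dots> = finsum R (\<lambda>i. (j \<otimes> b i) \<otimes> F i) {..<m}"
        unfolding b(2) by (rule S_smult) (use assms b jc in auto)
      finally have "i \<otimes> j = finsum R (\<lambda>i. (j \<otimes> b i) \<otimes> F i) {..<m}" .
      moreover have "\<forall>k<m. j \<otimes> b k \<in> K" using b(1) prod(2) by (simp add: ideal.I_r_closed[OF assms(2)])
      ultimately show ?case by (intro linI)
    next
      case (sum s1 s2)
      then show ?case
        using lin_ideal[OF assms] by (simp add: additive_subgroup.a_closed ideal.axioms(1))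
    qed
  qed
  show "lin R m F K \<subseteq> ideal_prod R (Idl (F ` {..<m})) K"
  proof
    fix x assume "x \<in> lin R m F K"
    then obtain b where b: "\<forall>i<m. b i \<in> K" "x = finsum R (\<lambda>i. b i \<otimes> F i) {..<m}"
      by (rule linE)
    show "x \<in> ideal_prod R (Idl (F ` {..<m})) K" unfolding b(2)
    proof (rule lin_in_ideal[OF ideal_prod_is_ideal[OF I assms(2)]])
      fix i assume i: "i < m"
      then have "F i \<in> F ` {..<m}" by simp
      then have Fi: "F i \<in> Idl (F ` {..<m})" by (rule subsetD[OF genideal_self[OF assms(1)]])
      have "F i \<otimes> b i \<in> ideal_prod R (Idl (F ` {..<m})) K" using Fi b(1) i by (simp add: ideal_prod.prod)
      moreover have "F i \<otimes> b i = b i \<otimes> F i"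
      proof (rule m_comm)
        show "F i \<in> carrier R" using assms(1) i by auto
        show "b i \<in> carrier R" using Kc b(1) i by auto
      qed
      ultimately show "b i \<otimes> F i \<in> ideal_prod R (Idl (F ` {..<m})) K" by simp
    qed
  qed
qed


lemma ideal_minus: "ideal K R \<Longrightarrow> x \<in> K \<Longrightarrow> y \<in> K \<Longrightarrow> x \<ominus> y \<in> K"
  unfolding a_minus_def
  by (simp add: additive_subgroup.a_closed additive_subgroup.a_inv_closed ideal.axioms(1))

lemma ideal_neg: "ideal K R \<Longrightarrow> x \<in> K \<Longrightarrow> \<ominus> x \<in> K"
  by (simp add: additive_subgroup.a_inv_closed ideal.axioms(1))

lemma ideal_add: "ideal K R \<Longrightarrow> x \<in> K \<Longrightarrow> y \<in> K \<Longrightarrow> x \<oplus> y \<in> K"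
  by (simp add: additive_subgroup.a_closed ideal.axioms(1))

lemma alg4: "x \<in> carrier R \<Longrightarrow> x = \<ominus> (\<zero> \<ominus> x)"
  by algebra

lemma alg5: "x \<in> carrier R \<Longrightarrow> x \<ominus> x = \<zero>"
  by algebra

lemma alg6: "x \<in> carrier R \<Longrightarrow> y \<in> carrier R \<Longrightarrow> x \<ominus> y \<oplus> y = x"
  by algebra

lemma alg7: "x \<in> carrier R \<Longrightarrow> y \<in> carrier R \<Longrightarrow> z \<in> carrier R \<Longrightarrow> x \<oplus> y \<oplus> z = x \<oplus> (y \<oplus> z)"
  by algebra

end



theorem theorem2p7:
  fixes R (structure) and I :: "'a set" and f g :: "nat \<Rightarrow> 'a" and m :: nat
  assumes "cring R" and "noetherian_ring R" and "ideal I R"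
    and "f ` {..<m} \<subseteq> carrier R" and "g ` {..<m} \<subseteq> carrier R"
    and "Idl (f ` {..<m}) \<subseteq> I" and "Idl (g ` {..<m}) \<subseteq> I"
    and "\<forall>i<m. f i \<ominus> g i \<in> ideal_power R I 2"
    and "aluffi_torsion_free R (Idl (f ` {..<m})) I"
  shows "aluffi_torsion_free R (Idl (g ` {..<m})) I \<longleftrightarrow>
    (\<forall>n::nat. syz R m f \<inter> ideal_vecs R m (ideal_power R I n)
       \<subseteq> vecs_sum R m (syz R m g) (ideal_vecs R m (ideal_power R I (Suc n))))"
proof -
  interpret cring R by (rule assms(1))
  note Iid = assms(3)
  have Pid: "\<And>n. ideal (ideal_power R I n) R" by (rule pow_ideal[OF Iid])
  have Pc: "\<And>n x. x \<in> ideal_power R I n \<Longrightarrow> x \<in> carrier R" by (rule ideal.Icarr[OF Pid])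
  have fc: "\<And>i. i < m \<Longrightarrow> f i \<in> carrier R" using assms(4) by auto
  have gc: "\<And>i. i < m \<Longrightarrow> g i \<in> carrier R" using assms(5) by auto
  have gI: "g i \<in> ideal_power R I 1" if "i < m" for i
  proof -
    have "g i \<in> g ` {..<m}" using that by simp
    then have "g i \<in> Idl (g ` {..<m})" by (rule subsetD[OF genideal_self[OF assms(5)]])
    then show ?thesis using assms(7) pow_one[OF Iid] by auto
  qed
  have fg: "\<And>i. i < m \<Longrightarrow> f i \<ominus> g i \<in> ideal_power R I 2" using assms(8) by auto
  have J1: "Idl (f ` {..<m}) = lin R m f (carrier R)" by (rule Idl_lin[OF assms(4)])
  have J2: "Idl (g ` {..<m}) = lin R m g (carrier R)" by (rule Idl_lin[OF assms(5)])
  have PL1: "\<And>n. ideal_prod R (lin R m f (carrier R)) (ideal_power R I n) = lin R m f (ideal_power R I n)"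
    using prod_lin[OF assms(4) Pid] J1 by simp
  have PL2: "\<And>n. ideal_prod R (lin R m g (carrier R)) (ideal_power R I n) = lin R m g (ideal_power R I n)"
    using prod_lin[OF assms(5) Pid] J2 by simp
  have TF1all: "\<forall>n\<ge>1. lin R m f (carrier R) \<inter> ideal_power R I n = lin R m f (ideal_power R I (n - 1))"
    using assms(9) unfolding aluffi_torsion_free_def J1 PL1 .
  have TF1: "lin R m f (carrier R) \<inter> ideal_power R I n = lin R m f (ideal_power R I (n - 1))"
    if "n \<ge> 1" for n
    using mp[OF spec[OF TF1all, of n] that] .
  have TF2: "aluffi_torsion_free R (Idl (g ` {..<m})) I \<longleftrightarrow>
      (\<forall>n\<ge>1. lin R m g (carrier R) \<inter> ideal_power R I n = lin R m g (ideal_power R I (n - 1)))"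
    unfolding aluffi_torsion_free_def J2 PL2 by (rule refl)
  have diff: "finsum R (\<lambda>i. b i \<otimes> f i) {..<m} \<ominus> finsum R (\<lambda>i. b i \<otimes> g i) {..<m}
      \<in> ideal_power R I (k + 2)" if b: "\<And>i. i < m \<Longrightarrow> b i \<in> ideal_power R I k" for b k
  proof -
    have "finsum R (\<lambda>i. b i \<otimes> f i) {..<m} \<ominus> finsum R (\<lambda>i. b i \<otimes> g i) {..<m}
       = finsum R (\<lambda>i. b i \<otimes> (f i \<ominus> g i)) {..<m}"
      by (rule S_sub2[OF assms(4,5)]) (use b Pc in auto)
    also have "\<dots> \<in> ideal_power R I (k + 2)"
    proof (rule lin_in_ideal[OF Pid])
      fix i assume i: "i < m"
      show "b i \<otimes> (f i \<ominus> g i) \<in> ideal_power R I (k + 2)"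
        by (rule pow_mult[OF Iid b[OF i] fg[OF i]])
    qed
    finally show ?thesis .
  qed
  show ?thesis
  proof
    assume tf2: "aluffi_torsion_free R (Idl (g ` {..<m})) I"
    have T2all: "\<forall>n\<ge>1. lin R m g (carrier R) \<inter> ideal_power R I n = lin R m g (ideal_power R I (n - 1))"
      using tf2 unfolding TF2 .
    have T2: "lin R m g (carrier R) \<inter> ideal_power R I n = lin R m g (ideal_power R I (n - 1))"
      if "n \<ge> 1" for n
      using mp[OF spec[OF T2all, of n] that] .
    show "\<forall>n::nat. syz R m f \<inter> ideal_vecs R m (ideal_power R I n)
       \<subseteq> vecs_sum R m (syz R m g) (ideal_vecs R m (ideal_power R I (Suc n)))"
    proof (intro allI subsetI)
      fix n a assume "a \<in> syz R m f \<inter> ideal_vecs R m (ideal_power R I n)"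
      then have av: "a \<in> vecs R m" and aP: "\<And>i. i < m \<Longrightarrow> a i \<in> ideal_power R I n"
        and af: "finsum R (\<lambda>i. a i \<otimes> f i) {..<m} = \<zero>"
        unfolding syz_def ideal_vecs_def by auto
      have ac: "\<And>i. i < m \<Longrightarrow> a i \<in> carrier R" using av unfolding vecs_def by auto
      have az: "\<And>i. i \<ge> m \<Longrightarrow> a i = \<zero>" using av unfolding vecs_def by auto
      define x where "x = finsum R (\<lambda>i. a i \<otimes> g i) {..<m}"
      have xc: "x \<in> carrier R" unfolding x_def by (rule finsum_closed) (use ac gc in auto)
      have "\<zero> \<ominus> x \<in> ideal_power R I (n + 2)" using diff[of a n] aP af unfolding x_def by simp
      then have "\<ominus> (\<zero> \<ominus> x) \<in> ideal_power R I (n + 2)" by (rule ideal_neg[OF Pid])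
      then have xP: "x \<in> ideal_power R I (Suc (Suc n))" using alg4[OF xc] by simp
      have xl: "x \<in> lin R m g (carrier R)" unfolding x_def by (rule linI) (use ac in auto)
      have "x \<in> lin R m g (ideal_power R I (Suc n))"
        using T2[of "Suc (Suc n)"] xP xl by auto
      then obtain c where c: "\<forall>i<m. c i \<in> ideal_power R I (Suc n)"
        "x = finsum R (\<lambda>i. c i \<otimes> g i) {..<m}" by (rule linE)
      have cc: "\<And>i. i < m \<Longrightarrow> c i \<in> carrier R" using c(1) Pc by blast
      define c' where "c' = (\<lambda>i. if i < m then c i else \<zero>)"
      define z where "z = (\<lambda>i. if i < m then a i \<ominus> c i else \<zero>)"
      have zs: "z \<in> syz R m g"
      proof -
        have "finsum R (\<lambda>i. z i \<otimes> g i) {..<m} = finsum R (\<lambda>i. (a i \<ominus> c i) \<otimes> g i) {..<m}"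
          by (rule finsum_cong') (use ac cc gc in \<open>auto simp: z_def\<close>)
        also have "\<dots> = x \<ominus> finsum R (\<lambda>i. c i \<otimes> g i) {..<m}" unfolding x_def
          by (rule S_sub[OF assms(5)]) (use ac cc in auto)
        also have "\<dots> = x \<ominus> x" using c(2) by simp
        also have "\<dots> = \<zero>" using xc by (rule alg5)
        finally show ?thesis unfolding syz_def vecs_def using ac cc by (auto simp: z_def)
      qed
      have cv: "c' \<in> ideal_vecs R m (ideal_power R I (Suc n))"
        unfolding ideal_vecs_def vecs_def c'_def using c(1) cc by auto
      have aeq: "a = (\<lambda>i. if i < m then z i \<oplus> c' i else \<zero>)"
      proof
        fix i show "a i = (if i < m then z i \<oplus> c' i else \<zero>)"
          using alg6[OF ac cc, of i] az[of i] by (auto simp: z_def c'_def)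
      qed
      show "a \<in> vecs_sum R m (syz R m g) (ideal_vecs R m (ideal_power R I (Suc n)))"
        unfolding vecs_sum_def using aeq zs cv by blast
    qed
  next
    assume cond: "\<forall>n::nat. syz R m f \<inter> ideal_vecs R m (ideal_power R I n)
       \<subseteq> vecs_sum R m (syz R m g) (ideal_vecs R m (ideal_power R I (Suc n)))"
    show "aluffi_torsion_free R (Idl (g ` {..<m})) I"
      unfolding TF2
    proof (intro allI impI)
      fix n :: nat assume "n \<ge> 1"
      then obtain n' where n: "n = Suc n'" by (cases n) auto
      show "lin R m g (carrier R) \<inter> ideal_power R I n = lin R m g (ideal_power R I (n - 1))"
      proof
        show "lin R m g (ideal_power R I (n - 1)) \<subseteq> lin R m g (carrier R) \<inter> ideal_power R I n"
        proof
          fix x assume "x \<in> lin R m g (ideal_power R I (n - 1))"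
          then obtain b where b: "\<forall>i<m. b i \<in> ideal_power R I n'"
            "x = finsum R (\<lambda>i. b i \<otimes> g i) {..<m}" unfolding n by (auto elim: linE)
          have "x \<in> lin R m g (carrier R)" by (rule linI[OF _ b(2)]) (use b(1) Pc in auto)
          moreover have "x \<in> ideal_power R I n"
            unfolding b(2) n
          proof (rule lin_in_ideal[OF Pid])
            fix i assume "i < m"
            then have "b i \<otimes> g i \<in> ideal_power R I (n' + 1)"
              using b(1) by (intro pow_mult[OF Iid _ gI]) auto
            then show "b i \<otimes> g i \<in> ideal_power R I (Suc n')" by simp
          qed
          ultimately show "x \<in> lin R m g (carrier R) \<inter> ideal_power R I n" by blast
        qed
        show "lin R m g (carrier R) \<inter> ideal_power R I n \<subseteq> lin R m g (ideal_power R I (n - 1))"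
        proof
          fix x assume x: "x \<in> lin R m g (carrier R) \<inter> ideal_power R I n"
          have claim: "k \<le> n' \<Longrightarrow> \<exists>b. (\<forall>i<m. b i \<in> ideal_power R I k) \<and> x = finsum R (\<lambda>i. b i \<otimes> g i) {..<m}" for k
          proof (induction k)
            case 0
            from x have "x \<in> lin R m g (carrier R)" by blast
            then show ?case by (auto elim: linE)
          next
            case (Suc k)
            then obtain b where b: "\<forall>i<m. b i \<in> ideal_power R I k"
              "x = finsum R (\<lambda>i. b i \<otimes> g i) {..<m}" by auto
            have bc: "\<And>i. i < m \<Longrightarrow> b i \<in> carrier R" using b(1) Pc by blast
            define sf where "sf = finsum R (\<lambda>i. b i \<otimes> f i) {..<m}"
            have sfc: "sf \<in> carrier R" unfolding sf_def by (rule finsum_closed) (use bc fc in auto)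
            have xc: "x \<in> carrier R" using x Pc by blast
            have d1: "sf \<ominus> x \<in> ideal_power R I (k + 2)"
              unfolding sf_def b(2) using diff[of b k] b(1) by auto
            have "x \<in> ideal_power R I (k + 2)"
              using x pow_antimono[OF Iid, of "k + 2" n] Suc.prems n by auto
            then have "sf \<ominus> x \<oplus> x \<in> ideal_power R I (k + 2)" by (rule ideal_add[OF Pid d1])
            then have sfP: "sf \<in> ideal_power R I (Suc (Suc k))" using alg6[OF sfc xc] by simp
            have sfl: "sf \<in> lin R m f (carrier R)" unfolding sf_def by (rule linI) (use bc in auto)
            have "sf \<in> lin R m f (ideal_power R I (Suc k))"
              using TF1[of "Suc (Suc k)"] sfP sfl by auto
            then obtain d where d: "\<forall>i<m. d i \<in> ideal_power R I (Suc k)"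
              "sf = finsum R (\<lambda>i. d i \<otimes> f i) {..<m}" by (rule linE)
            have dc: "\<And>i. i < m \<Longrightarrow> d i \<in> carrier R" using d(1) Pc by blast
            have dk: "\<And>i. i < m \<Longrightarrow> d i \<in> ideal_power R I k"
              using d(1) pow_Suc_sub[OF Iid, of k] by auto
            define a where "a = (\<lambda>i. if i < m then b i \<ominus> d i else \<zero>)"
            have "finsum R (\<lambda>i. a i \<otimes> f i) {..<m} = finsum R (\<lambda>i. (b i \<ominus> d i) \<otimes> f i) {..<m}"
              by (rule finsum_cong') (use bc dc fc in \<open>auto simp: a_def\<close>)
            also have "\<dots> = sf \<ominus> finsum R (\<lambda>i. d i \<otimes> f i) {..<m}" unfolding sf_def
              by (rule S_sub[OF assms(4)]) (use bc dc in auto)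
            also have "\<dots> = sf \<ominus> sf" using d(2) by simp
            also have "\<dots> = \<zero>" using sfc by (rule alg5)
            finally have as: "a \<in> syz R m f" unfolding syz_def vecs_def using bc dc by (auto simp: a_def)
            have "a \<in> ideal_vecs R m (ideal_power R I k)"
              unfolding ideal_vecs_def using as b(1) dk
              by (auto simp: syz_def a_def intro: ideal_minus[OF Pid])
            then have "a \<in> vecs_sum R m (syz R m g) (ideal_vecs R m (ideal_power R I (Suc k)))"
              using cond as by blast
            then obtain z c where zc: "a = (\<lambda>i. if i < m then z i \<oplus> c i else \<zero>)"
              "z \<in> syz R m g" "c \<in> ideal_vecs R m (ideal_power R I (Suc k))"
              unfolding vecs_sum_def by blast
            have zc': "\<And>i. i < m \<Longrightarrow> z i \<in> carrier R" using zc(2) unfolding syz_def vecs_def by auto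
            have zs: "finsum R (\<lambda>i. z i \<otimes> g i) {..<m} = \<zero>" using zc(2) unfolding syz_def by auto
            have cP: "\<And>i. i < m \<Longrightarrow> c i \<in> ideal_power R I (Suc k)"
              using zc(3) unfolding ideal_vecs_def by auto
            have cc: "\<And>i. i < m \<Longrightarrow> c i \<in> carrier R" using cP Pc by blast
            have beq: "b i = z i \<oplus> (c i \<oplus> d i)" if i: "i < m" for i
            proof -
              have "b i = (b i \<ominus> d i) \<oplus> d i" using alg6[OF bc[OF i] dc[OF i]] by simp
              also have "b i \<ominus> d i = z i \<oplus> c i" using fun_cong[OF zc(1), of i] i by (simp add: a_def)
              finally show ?thesis using zc'[OF i] cc[OF i] dc[OF i] by (simp add: alg7)
            qed
            define b' where "b' = (\<lambda>i. c i \<oplus> d i)"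
            have b'P: "\<forall>i<m. b' i \<in> ideal_power R I (Suc k)"
            proof (intro allI impI)
              fix i assume i: "i < m"
              have "d i \<in> ideal_power R I (Suc k)" using d(1) i by blast
              then show "b' i \<in> ideal_power R I (Suc k)"
                unfolding b'_def by (rule ideal_add[OF Pid cP[OF i]])
            qed
            have "x = finsum R (\<lambda>i. (z i \<oplus> b' i) \<otimes> g i) {..<m}"
              unfolding b(2) by (rule finsum_cong') (use beq zc' cc dc gc in \<open>auto simp: b'_def\<close>)
            also have "\<dots> = finsum R (\<lambda>i. z i \<otimes> g i) {..<m} \<oplus> finsum R (\<lambda>i. b' i \<otimes> g i) {..<m}"
              by (rule S_add[OF assms(5)]) (use zc' cc dc in \<open>auto simp: b'_def\<close>)
            also have "\<dots> = finsum R (\<lambda>i. b' i \<otimes> g i) {..<m}"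
            proof -
              have "finsum R (\<lambda>i. b' i \<otimes> g i) {..<m} \<in> carrier R"
                by (rule finsum_closed) (use cc dc gc in \<open>auto simp: b'_def\<close>)
              then show ?thesis using zs by simp
            qed
            finally show ?case using b'P by blast
          qed
          obtain b where "\<forall>i<m. b i \<in> ideal_power R I n'" "x = finsum R (\<lambda>i. b i \<otimes> g i) {..<m}"
            using claim[of n'] by auto
          then show "x \<in> lin R m g (ideal_power R I (n - 1))" unfolding n by (auto intro: linI)
        qed
      qed
    qed
  qed
qed

end
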